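(* Let $(X,\sigma,T)$ be as in the context and let $\pi^L_{eq}:L\to L_{eq}$ be the maximal equicontinuous factor of the minimal system $(L,\sigma_L)$, with the group structure on $L_{eq}$ chosen so that $e_{eq}:=\pi^L_{eq}(e)$ is the neutral element. Then $\pi^L_{eq}$ is a semigroup morphism, $\pi^L_{eq}(f)=\pi^L_{eq}(ef)$ for all $f\in L$, and there is a closed normal subgroup $H$ of $\mathcal G$ with $\Gamma\subset H$ such that $\pi^L_{eq}(f)\mapsto efH$ is a well-defined group isomorphism $L_{eq}\cong \mathcal G/H$; i.e. the map $L\ni f\mapsto ef \bmod H\in\mathcal G/H$ is a maximal equicontinuous factor of $(L,\sigma_L)$.
   Context: $T$ is an abelian group acting continuously by $\sigma$ on a compact Hausdorff space $X$; the action is minimal and not distal. The Ellis semigroup $E(X)$ is the closure of $\{\sigma^t:t\in T\}$ in $X^X$ (pointwise convergence, composition), with $T$-action $\sigma_E^t(f)=\sigma^t\circ f$. Fix a minimal idempotent $e\in E(X)$, put $L=E(X)e$ (a minimal left ideal; $\sigma_L$ denotes the restriction of $\sigma_E$ to $L$, and $(L,\sigma_L)$ is minimal) and $\mathcal G=eL=eE(X)e$ (a group with identity $e$), with the subspace topology. The kernel (smallest two-sided ideal) of $E(X)$ is completely simple, hence isomorphic to a Rees matrix semigroup with structure group $\mathcal G$; the little structure group $\Gamma\subset \mathcal G$ is the subgroup generated by the entries of its sandwich matrix; equivalently $\Gamma$ is the intersection of $\mathcal G$ with the closure of the subsemigroup generated by the minimal idempotents of $E(X)$. *)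

theory Defs
  imports "HOL-Analysis.Analysis" "HOL-Algebra.Coset"
begin

definition is_action :: "('t::ab_group_add \<Rightarrow> 'x::topological_space \<Rightarrow> 'x) \<Rightarrow> bool" where
  "is_action \<sigma> \<longleftrightarrow> \<sigma> 0 = id \<and> (\<forall>s t. \<sigma> (s + t) = \<sigma> s \<circ> \<sigma> t) \<and> (\<forall>t. continuous_on UNIV (\<sigma> t))"

definition minimal_action :: "('t \<Rightarrow> 'x::topological_space \<Rightarrow> 'x) \<Rightarrow> bool" where
  "minimal_action \<sigma> \<longleftrightarrow>
     (\<forall>A. closed A \<and> A \<noteq> {} \<and> (\<forall>t. \<sigma> t ` A \<subseteq> A) \<longrightarrow> A = UNIV)"

definition distal_action :: "('t \<Rightarrow> 'x::topological_space \<Rightarrow> 'x) \<Rightarrow> bool" where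
  "distal_action \<sigma> \<longleftrightarrow>
     (\<forall>x y. x \<noteq> y \<longrightarrow> (\<forall>z. (z, z) \<notin> closure (range (\<lambda>t. (\<sigma> t x, \<sigma> t y)))))"

text \<open>Closure of the set of maps in the topology of pointwise convergence
  (the product topology on 'x \<Rightarrow> 'x); the product is composition.\<close>
definition ellis :: "('t \<Rightarrow> 'x \<Rightarrow> 'x::topological_space) \<Rightarrow> ('x \<Rightarrow> 'x) set" where
  "ellis \<sigma> = closure (range \<sigma>)"

definition left_ideal :: "('a \<Rightarrow> 'a) set \<Rightarrow> ('a \<Rightarrow> 'a) set \<Rightarrow> bool" where
  "left_ideal E I \<longleftrightarrow> I \<noteq> {} \<and> I \<subseteq> E \<and> (\<forall>f\<in>E. \<forall>g\<in>I. f \<circ> g \<in> I)"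

definition minimal_left_ideal :: "('a \<Rightarrow> 'a) set \<Rightarrow> ('a \<Rightarrow> 'a) set \<Rightarrow> bool" where
  "minimal_left_ideal E I \<longleftrightarrow> left_ideal E I \<and> (\<forall>J. left_ideal E J \<and> J \<subseteq> I \<longrightarrow> J = I)"

definition minimal_idempotent :: "('a \<Rightarrow> 'a) set \<Rightarrow> ('a \<Rightarrow> 'a) \<Rightarrow> bool" where
  "minimal_idempotent E e \<longleftrightarrow> e \<in> E \<and> e \<circ> e = e \<and> (\<exists>I. minimal_left_ideal E I \<and> e \<in> I)"

definition left_ideal_of :: "('a \<Rightarrow> 'a) set \<Rightarrow> ('a \<Rightarrow> 'a) \<Rightarrow> ('a \<Rightarrow> 'a) set" where
  "left_ideal_of E e = {f \<circ> e | f. f \<in> E}"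

definition ellis_group :: "('a \<Rightarrow> 'a) set \<Rightarrow> ('a \<Rightarrow> 'a) \<Rightarrow> ('a \<Rightarrow> 'a) set" where
  "ellis_group E e = {e \<circ> f | f. f \<in> left_ideal_of E e}"

definition ellis_group_mon :: "('a \<Rightarrow> 'a) set \<Rightarrow> ('a \<Rightarrow> 'a) \<Rightarrow> ('a \<Rightarrow> 'a) monoid" where
  "ellis_group_mon E e = \<lparr>carrier = ellis_group E e, mult = (\<circ>), one = e\<rparr>"

inductive_set gen_semigroup :: "('a \<Rightarrow> 'a) set \<Rightarrow> ('a \<Rightarrow> 'a) set" for S where
  base: "s \<in> S \<Longrightarrow> s \<in> gen_semigroup S"
| comp: "a \<in> gen_semigroup S \<Longrightarrow> b \<in> gen_semigroup S \<Longrightarrow> a \<circ> b \<in> gen_semigroup S"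

definition little_structure_group ::
  "('a \<Rightarrow> 'a::topological_space) set \<Rightarrow> ('a \<Rightarrow> 'a) \<Rightarrow> ('a \<Rightarrow> 'a) set" where
  "little_structure_group E e =
     ellis_group E e \<inter> closure (gen_semigroup {u. minimal_idempotent E u})"

text \<open>Equicontinuity of a family of self-maps of a compact Hausdorff space, w.r.t.
  its unique uniformity (entourages = neighbourhoods of the diagonal).\<close>
definition equicontinuous_family :: "'y topology \<Rightarrow> ('t \<Rightarrow> 'y \<Rightarrow> 'y) \<Rightarrow> bool" where
  "equicontinuous_family Y \<tau> \<longleftrightarrow>
     (\<forall>W. openin (prod_topology Y Y) W \<and> (\<forall>y\<in>topspace Y. (y, y) \<in> W) \<longrightarrow>
        (\<exists>V. openin (prod_topology Y Y) V \<and> (\<forall>y\<in>topspace Y. (y, y) \<in> V) \<and>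
             (\<forall>t. \<forall>(y, y')\<in>V. (\<tau> t y, \<tau> t y') \<in> W)))"

definition factor_map ::
  "'l topology \<Rightarrow> ('t \<Rightarrow> 'l \<Rightarrow> 'l) \<Rightarrow> 'y topology \<Rightarrow> ('t \<Rightarrow> 'y \<Rightarrow> 'y) \<Rightarrow> ('l \<Rightarrow> 'y) \<Rightarrow> bool" where
  "factor_map L \<sigma>L Y \<tau> p \<longleftrightarrow>
     compact_space Y \<and> Hausdorff_space Y \<and> (\<forall>t. continuous_map Y Y (\<tau> t)) \<and>
     continuous_map L Y p \<and> p ` topspace L = topspace Y \<and>
     (\<forall>t. \<forall>f\<in>topspace L. p (\<sigma>L t f) = \<tau> t (p f))"

definition equicontinuous_factor ::
  "'l topology \<Rightarrow> ('t \<Rightarrow> 'l \<Rightarrow> 'l) \<Rightarrow> 'y topology \<Rightarrow> ('t \<Rightarrow> 'y \<Rightarrow> 'y) \<Rightarrow> ('l \<Rightarrow> 'y) \<Rightarrow> bool" where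
  "equicontinuous_factor L \<sigma>L Y \<tau> p \<longleftrightarrow> factor_map L \<sigma>L Y \<tau> p \<and> equicontinuous_family Y \<tau>"

text \<open>Every factor of L is isomorphic to a quotient of L, which can be realised on a
  carrier of type 'l set; so quantifying over factors with carrier type 'l set
  loses no generality.\<close>
definition max_equicontinuous_factor ::
  "'l topology \<Rightarrow> ('t \<Rightarrow> 'l \<Rightarrow> 'l) \<Rightarrow> 'y topology \<Rightarrow> ('t \<Rightarrow> 'y \<Rightarrow> 'y) \<Rightarrow> ('l \<Rightarrow> 'y) \<Rightarrow> bool" where
  "max_equicontinuous_factor L \<sigma>L Y \<tau> p \<longleftrightarrow>
     equicontinuous_factor L \<sigma>L Y \<tau> p \<and>
     (\<forall>(Z :: 'l set topology) \<rho> q. equicontinuous_factor L \<sigma>L Z \<rho> q \<longrightarrow>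
        (\<exists>h. continuous_map Y Z h \<and> (\<forall>f\<in>topspace L. q f = h (p f))))"

end

theory Submission
  imports Defs
begin

lemma comp_right_cont:
  "continuous_on S (\<lambda>f::'a \<Rightarrow> 'b::topological_space. f \<circ> h)"
proof (rule continuous_on_coordinatewise_then_product)
  fix i
  have "continuous_on UNIV (\<lambda>f::'a \<Rightarrow> 'b. f (h i))" by simp
  then show "continuous_on S (\<lambda>f::'a \<Rightarrow> 'b. (f \<circ> h) i)"
    unfolding o_def by (rule continuous_on_subset) simp
qed

lemma comp_left_cont:
  fixes g :: "'b::topological_space \<Rightarrow> 'b"
  assumes "continuous_on UNIV g"
  shows "continuous_on S (\<lambda>f::'a \<Rightarrow> 'b. g \<circ> f)"
proof (rule continuous_on_coordinatewise_then_product)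
  fix i
  have "continuous_on UNIV (\<lambda>f::'a \<Rightarrow> 'b. g (f i))"
    by (rule continuous_on_compose2[OF assms continuous_on_product_coordinates[of i]]) simp
  then show "continuous_on S (\<lambda>f::'a \<Rightarrow> 'b. (g \<circ> f) i)"
    unfolding o_def by (rule continuous_on_subset) simp
qed

lemma ellis_left:
  fixes \<sigma> :: "'t::ab_group_add \<Rightarrow> 'x::topological_space \<Rightarrow> 'x"
  assumes act: "is_action \<sigma>" and g: "g \<in> ellis \<sigma>"
  shows "\<sigma> t \<circ> g \<in> ellis \<sigma>"
proof -
  have c: "continuous_on UNIV (\<sigma> t)" using act by (simp add: is_action_def)
  have "(\<lambda>f. \<sigma> t \<circ> f) ` closure (range \<sigma>) \<subseteq> closure (range \<sigma>)"
  proof (rule image_closure_subset)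
    show "continuous_on (closure (range \<sigma>)) (\<lambda>f. \<sigma> t \<circ> f)"
      by (rule comp_left_cont[OF c])
    show "(\<lambda>f. \<sigma> t \<circ> f) ` range \<sigma> \<subseteq> closure (range \<sigma>)"
    proof
      fix y assume "y \<in> (\<lambda>f. \<sigma> t \<circ> f) ` range \<sigma>"
      then obtain s where "y = \<sigma> t \<circ> \<sigma> s" by blast
      moreover have "\<sigma> (t + s) = \<sigma> t \<circ> \<sigma> s" using act unfolding is_action_def by blast
      ultimately have "y \<in> range \<sigma>" by (metis rangeI)
      then show "y \<in> closure (range \<sigma>)" by (meson closure_subset subsetD)
    qed
  qed simp
  then have "\<forall>x\<in>closure (range \<sigma>). \<sigma> t \<circ> x \<in> closure (range \<sigma>)"
    by (simp only: image_subset_iff)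
  then show ?thesis using g unfolding ellis_def by blast
qed

lemma ellis_comp:
  fixes \<sigma> :: "'t::ab_group_add \<Rightarrow> 'x::topological_space \<Rightarrow> 'x"
  assumes act: "is_action \<sigma>" and f: "f \<in> ellis \<sigma>" and g: "g \<in> ellis \<sigma>"
  shows "f \<circ> g \<in> ellis \<sigma>"
proof -
  have "(\<lambda>f. f \<circ> g) ` closure (range \<sigma>) \<subseteq> closure (range \<sigma>)"
  proof (rule image_closure_subset)
    show "continuous_on (closure (range \<sigma>)) (\<lambda>f. f \<circ> g)"
      by (rule comp_right_cont)
    show "(\<lambda>f. f \<circ> g) ` range \<sigma> \<subseteq> closure (range \<sigma>)"
    proof
      fix y assume "y \<in> (\<lambda>f. f \<circ> g) ` range \<sigma>"
      then obtain s where "y = \<sigma> s \<circ> g" by blast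
      then show "y \<in> closure (range \<sigma>)" using ellis_left[OF act g, of s] unfolding ellis_def by simp
    qed
  qed simp
  then have "\<forall>x\<in>closure (range \<sigma>). x \<circ> g \<in> closure (range \<sigma>)"
    by (simp only: image_subset_iff)
  then show ?thesis using f unfolding ellis_def by blast
qed

lemma ellis_closed: "closed (ellis \<sigma>)"
  by (simp add: ellis_def)


theorem mainTheorem2:
  fixes \<sigma> :: "'t::ab_group_add \<Rightarrow> 'x::t2_space \<Rightarrow> 'x"
    and e :: "'x \<Rightarrow> 'x"
    and Leq :: "'y topology"
    and \<tau> :: "'t \<Rightarrow> 'y \<Rightarrow> 'y"
    and \<pi> :: "('x \<Rightarrow> 'x) \<Rightarrow> 'y"
    and m :: "'y \<Rightarrow> 'y \<Rightarrow> 'y"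
  assumes X_compact: "compact (UNIV :: 'x set)"
    and action: "is_action \<sigma>"
    and minimal: "minimal_action \<sigma>"
    and not_distal: "\<not> distal_action \<sigma>"
    and e_min: "minimal_idempotent (ellis \<sigma>) e"
    and max_eq: "max_equicontinuous_factor (top_of_set (left_ideal_of (ellis \<sigma>) e))
                   (\<lambda>t f. \<sigma> t \<circ> f) Leq \<tau> \<pi>"
    and grp: "comm_group \<lparr>carrier = topspace Leq, mult = m, one = \<pi> e\<rparr>"
    and m_cont: "continuous_map (prod_topology Leq Leq) Leq (\<lambda>(a, b). m a b)"
    and rotation: "\<forall>t. \<forall>y\<in>topspace Leq. \<tau> t y = m (\<tau> t (\<pi> e)) y"
  shows "(\<forall>f\<in>left_ideal_of (ellis \<sigma>) e. \<forall>g\<in>left_ideal_of (ellis \<sigma>) e.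
            \<pi> (f \<circ> g) = m (\<pi> f) (\<pi> g))
       \<and> (\<forall>f\<in>left_ideal_of (ellis \<sigma>) e. \<pi> f = \<pi> (e \<circ> f))
       \<and> (\<exists>H. H \<lhd> ellis_group_mon (ellis \<sigma>) e
              \<and> closedin (top_of_set (ellis_group (ellis \<sigma>) e)) H
              \<and> little_structure_group (ellis \<sigma>) e \<subseteq> H
              \<and> (\<exists>\<phi>. \<phi> \<in> iso \<lparr>carrier = topspace Leq, mult = m, one = \<pi> e\<rparr>
                              (ellis_group_mon (ellis \<sigma>) e Mod H)
                     \<and> (\<forall>f\<in>left_ideal_of (ellis \<sigma>) e.
                           \<phi> (\<pi> f) = (e \<circ> f) <#\<^bsub>ellis_group_mon (ellis \<sigma>) e\<^esub> H)))"
proof -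
  define E where "E = ellis \<sigma>"
  define L where "L = left_ideal_of E e"
  define G where "G = ellis_group E e"
  define GM where "GM = ellis_group_mon E e"
  define Lq where "Lq = \<lparr>carrier = topspace Leq, mult = m, one = \<pi> e\<rparr>"
  have eE: "e \<in> E" and ee: "e \<circ> e = e" using e_min by (auto simp: minimal_idempotent_def E_def)
  have Ecomp: "f \<circ> g \<in> E" if "f \<in> E" "g \<in> E" for f g
    using ellis_comp[OF action] that by (simp add: E_def)
  have Lchar: "f \<in> L \<longleftrightarrow> (\<exists>g\<in>E. f = g \<circ> e)" for f
    by (auto simp: L_def left_ideal_of_def)
  have Gchar: "f \<in> G \<longleftrightarrow> (\<exists>g\<in>L. f = e \<circ> g)" for f
    by (auto simp: G_def ellis_group_def L_def)
  have eL: "e \<in> L" unfolding Lchar using eE ee by (intro bexI[of _ e]) auto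
  have LE: "L \<subseteq> E" unfolding subset_iff Lchar using Ecomp eE by blast
  have Le: "f \<circ> e = f" if fL: "f \<in> L" for f
  proof -
    obtain g where "f = g \<circ> e" using fL Lchar[of f] by blast
    then show ?thesis using ee by (simp add: comp_assoc)
  qed
  have EL: "f \<circ> h \<in> L" if fh: "f \<in> E" "h \<in> L" for f h
  proof -
    obtain g where g: "g \<in> E" "h = g \<circ> e" using fh Lchar[of h] by blast
    then have "f \<circ> h = (f \<circ> g) \<circ> e" by (simp add: comp_assoc)
    then show ?thesis unfolding Lchar using Ecomp g fh by blast
  qed
  have GL: "G \<subseteq> L" unfolding subset_iff Gchar using EL eE by blast
  have fm: "factor_map (top_of_set L) (\<lambda>t f. \<sigma> t \<circ> f) Leq \<tau> \<pi>"
    using max_eq by (simp add: max_equicontinuous_factor_def equicontinuous_factor_def L_def E_def)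
  have Haus: "Hausdorff_space Leq" and pic: "continuous_map (top_of_set L) Leq \<pi>"
    and pisurj: "\<pi> ` L = topspace Leq"
    and equiv: "\<And>t f. f \<in> L \<Longrightarrow> \<pi> (\<sigma> t \<circ> f) = \<tau> t (\<pi> f)"
    using fm by (auto simp: factor_map_def)
  have piL: "\<pi> f \<in> topspace Leq" if "f \<in> L" for f using pisurj that by blast
  have Lqg: "comm_group Lq" using grp by (simp add: Lq_def)
  then interpret Lq: comm_group Lq .
  have Lqc: "carrier Lq = topspace Leq" "mult Lq = m" "one Lq = \<pi> e" by (simp_all add: Lq_def)
  have sigE: "\<sigma> t \<in> E" for t by (simp add: E_def ellis_def closure_subset[THEN subsetD])
  have Eclosed: "closed E" by (simp add: E_def ellis_def)
  have contR: "continuous_map (top_of_set E) Leq (\<lambda>f. \<pi> (f \<circ> h))" if "h \<in> L" for h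
  proof -
    have "continuous_map (top_of_set E) (top_of_set L) (\<lambda>f. f \<circ> h)"
      using EL that comp_right_cont
      by (intro continuous_map_into_subtopology) (auto simp: continuous_map_iff_continuous)
    then show ?thesis using pic by (rule continuous_map_compose[unfolded o_def])
  qed
  have key: "\<pi> (f \<circ> h) = m (\<pi> (f \<circ> e)) (\<pi> h)" if f: "f \<in> E" and h: "h \<in> L" for f h
  proof -
    define A where "A = {f \<in> topspace (top_of_set E). \<pi> (f \<circ> h) = m (\<pi> (f \<circ> e)) (\<pi> h)}"
    have c2: "continuous_map (top_of_set E) Leq (\<lambda>f. m (\<pi> (f \<circ> e)) (\<pi> h))"
    proof -
      have "continuous_map (top_of_set E) (prod_topology Leq Leq) (\<lambda>f. (\<pi> (f \<circ> e), \<pi> h))"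
        using contR[OF eL] piL[OF h] by (simp add: continuous_map_paired)
      from continuous_map_compose[OF this m_cont] show ?thesis by (simp add: o_def)
    qed
    have "closedin (top_of_set E) A"
      unfolding A_def by (rule closedin_continuous_maps_eq[OF Haus contR[OF h] c2])
    then have "closed A" using Eclosed by (rule closedin_closed_trans)
    moreover have "range \<sigma> \<subseteq> A"
    proof
      fix g assume "g \<in> range \<sigma>"
      then obtain t where t: "g = \<sigma> t" by auto
      have "\<pi> (\<sigma> t \<circ> h) = \<tau> t (\<pi> h)" using equiv h by simp
      also have "\<dots> = m (\<tau> t (\<pi> e)) (\<pi> h)" using rotation piL[OF h] by simp
      also have "\<dots> = m (\<pi> (\<sigma> t \<circ> e)) (\<pi> h)" using equiv[OF eL] by simp
      finally show "g \<in> A" using t sigE by (simp add: A_def)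
    qed
    ultimately have "closure (range \<sigma>) \<subseteq> A" by (rule closure_minimal[rotated])
    then show ?thesis using f by (auto simp: A_def E_def ellis_def)
  qed
  have part1: "\<pi> (f \<circ> g) = m (\<pi> f) (\<pi> g)" if "f \<in> L" "g \<in> L" for f g
    using key[of f g] that LE Le by auto
  have part2: "\<pi> f = \<pi> (e \<circ> f)" if "f \<in> L" for f
  proof -
    have "\<pi> (e \<circ> f) = m (\<pi> e) (\<pi> f)" using key[OF eE that] ee by simp
    also have "\<dots> = \<pi> f" using Lq.l_one[of "\<pi> f"] piL[OF that] Lqc by simp
    finally show ?thesis by simp
  qed
  obtain I where I: "minimal_left_ideal E I" "e \<in> I"
    using e_min by (auto simp: minimal_idempotent_def E_def)
  have Lleft: "left_ideal E L"
    unfolding left_ideal_def using eL LE EL by blast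
  have LI: "L \<subseteq> I"
  proof
    fix f assume "f \<in> L"
    then obtain g where "g \<in> E" "f = g \<circ> e" using Lchar[of f] by blast
    then show "f \<in> I" using I by (auto simp: minimal_left_ideal_def left_ideal_def)
  qed
  have Lmin: "J = L" if "left_ideal E J" "J \<subseteq> L" for J
  proof -
    have "L = I" using I Lleft LI by (auto simp: minimal_left_ideal_def)
    moreover have "J = I" using I that LI by (auto simp: minimal_left_ideal_def)
    ultimately show ?thesis by simp
  qed
  have GMc: "carrier GM = G" "mult GM = (\<circ>)" "one GM = e"
    by (simp_all add: GM_def G_def ellis_group_mon_def)
  have Gmul: "x \<circ> y \<in> G" if xy: "x \<in> G" "y \<in> G" for x y
  proof -
    obtain a where a: "a \<in> L" "x = e \<circ> a" using xy Gchar[of x] by blast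
    have "a \<circ> y \<in> L" using EL a LE GL xy by blast
    then show ?thesis unfolding Gchar using a by (auto simp: comp_assoc)
  qed
  have eG: "e \<in> G" unfolding Gchar using eL ee by (intro bexI[of _ e]) auto
  have Gone: "e \<circ> x = x" if xG: "x \<in> G" for x
  proof -
    obtain g where "x = e \<circ> g" using xG Gchar[of x] by blast
    then show ?thesis using ee by (simp add: comp_assoc[symmetric])
  qed
  have Ginv: "\<exists>y\<in>G. y \<circ> x = e" if x: "x \<in> G" for x
  proof -
    define J where "J = {k \<circ> x | k. k \<in> L}"
    have xL: "x \<in> L" using x GL by blast
    have JL: "J \<subseteq> L" using EL LE xL by (auto simp: J_def)
    have "left_ideal E J"
      unfolding left_ideal_def
    proof (intro conjI ballI)
      show "J \<noteq> {}" using eL by (auto simp: J_def)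
      show "J \<subseteq> E" using JL LE by blast
      fix f g assume "f \<in> E" "g \<in> J"
      then obtain k where "k \<in> L" "g = k \<circ> x" by (auto simp: J_def)
      then show "f \<circ> g \<in> J" using EL \<open>f \<in> E\<close> by (auto simp: J_def comp_assoc intro!: exI[of _ "f \<circ> k"])
    qed
    then have "J = L" using JL Lmin by blast
    then obtain k where k: "k \<in> L" "e = k \<circ> x" using eL by (auto simp: J_def)
    have "e \<circ> k \<in> G" using k Gchar[of "e \<circ> k"] by blast
    moreover have "(e \<circ> k) \<circ> x = e" using k ee by (simp add: comp_assoc)
    ultimately show ?thesis by blast
  qed
  have GMg: "group GM"
    by (rule groupI) (auto simp: GMc Gmul eG Gone Ginv comp_assoc)
  interpret GM: group GM by (rule GMg)
  have hom: "\<pi> \<in> hom GM Lq"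
  proof -
    have GLx: "\<And>x. x \<in> G \<Longrightarrow> x \<in> L" using GL by blast
    show ?thesis using GLx piL part1 by (auto simp: hom_def GMc Lqc)
  qed
  interpret gh: group_hom GM Lq \<pi>
    by (intro group_hom.intro group_hom_axioms.intro GMg Lq.is_group hom)
  define H where "H = kernel GM Lq \<pi>"
  have Hn: "H \<lhd> GM" unfolding H_def by (rule gh.normal_kernel)
  have Hchar: "H = {x \<in> topspace (top_of_set G). \<pi> x \<in> {\<pi> e}}"
    by (auto simp: H_def kernel_def GMc Lqc)
  have Hclosed: "closedin (top_of_set G) H"
    unfolding Hchar
  proof (rule closedin_continuous_map_preimage)
    show "continuous_map (top_of_set G) Leq \<pi>"
      using continuous_map_from_subtopology_mono[OF pic GL] .
    show "closedin Leq {\<pi> e}"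
      using Haus piL[OF eL] Hausdorff_imp_t1_space t1_space_closedin_singleton by metis
  qed
  define S where "S = {u. minimal_idempotent E u}"
  define B where "B = {u \<in> topspace (top_of_set E). \<pi> (u \<circ> e) = \<pi> e}"
  have genB: "u \<in> B" if "u \<in> gen_semigroup S" for u
    using that
  proof induction
    case (base s)
    then have sE: "s \<in> E" and ss: "s \<circ> s = s" by (auto simp: S_def minimal_idempotent_def)
    have seL: "s \<circ> e \<in> L" using EL sE eL by blast
    have "\<pi> (s \<circ> (s \<circ> e)) = m (\<pi> (s \<circ> e)) (\<pi> (s \<circ> e))" using key[OF sE seL] .
    then have "m (\<pi> (s \<circ> e)) (\<pi> (s \<circ> e)) = \<pi> (s \<circ> e)" using ss by (simp add: comp_assoc[symmetric])
    then have "\<pi> (s \<circ> e) = \<pi> e" using Lq.r_cancel_one[of "\<pi> (s \<circ> e)" "\<pi> (s \<circ> e)"] piL[OF seL] Lqc by simp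
    then show ?case using sE by (simp add: B_def)
  next
    case (comp a b)
    then have aE: "a \<in> E" and bE: "b \<in> E" and pa: "\<pi> (a \<circ> e) = \<pi> e" and pb: "\<pi> (b \<circ> e) = \<pi> e"
      by (auto simp: B_def)
    have beL: "b \<circ> e \<in> L" using EL bE eL by blast
    have "\<pi> (a \<circ> b \<circ> e) = \<pi> (a \<circ> (b \<circ> e))" by (simp add: comp_assoc)
    also have "\<dots> = m (\<pi> e) (\<pi> e)" using key[OF aE beL] pa pb by simp
    also have "\<dots> = \<pi> e" using Lq.l_one[of "\<pi> e"] Lq.one_closed Lqc by simp
    finally have "\<pi> (a \<circ> b \<circ> e) = \<pi> e" .
    then show ?case using Ecomp[OF aE bE] unfolding B_def topspace_subtopology topspace_euclidean by blast
  qed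
  have Bclosed: "closed B"
  proof -
    have "closedin (top_of_set E) B"
      unfolding B_def
      by (rule closedin_continuous_maps_eq[OF Haus contR[OF eL]]) (simp add: piL[OF eL])
    then show ?thesis using Eclosed by (rule closedin_closed_trans)
  qed
  have closB: "closure (gen_semigroup S) \<subseteq> B"
    using genB Bclosed by (intro closure_minimal) auto
  have Gam: "little_structure_group E e \<subseteq> H"
  proof
    fix g assume "g \<in> little_structure_group E e"
    then have gG: "g \<in> G" and gB: "g \<in> B" using closB
      by (auto simp: little_structure_group_def G_def S_def)
    have "\<pi> g = \<pi> e" using gB Le[of g] gG GL by (auto simp: B_def)
    then show "g \<in> H" using gG by (simp add: H_def kernel_def GMc Lqc)
  qed
  have surj: "\<pi> ` carrier GM = carrier Lq"
  proof
    show "\<pi> ` carrier GM \<subseteq> carrier Lq" using GL piL by (auto simp: GMc Lqc)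
    show "carrier Lq \<subseteq> \<pi> ` carrier GM"
    proof
      fix y assume "y \<in> carrier Lq"
      then obtain f where f: "f \<in> L" "y = \<pi> f" using pisurj Lqc by auto
      then have "e \<circ> f \<in> G" using Gchar[of "e \<circ> f"] by blast
      then show "y \<in> \<pi> ` carrier GM" using part2[OF f(1)] f GMc by auto
    qed
  qed
  define \<Psi> where "\<Psi> = (\<lambda>X. the_elem (\<pi> ` X))"
  have Psi: "\<Psi> \<in> iso (GM Mod H) Lq" unfolding \<Psi>_def H_def by (rule gh.FactGroup_iso_set[OF surj])
  have MG: "group (GM Mod H)" using Hn by (rule normal.factorgroup_is_group)
  define \<phi> where "\<phi> = inv_into (carrier (GM Mod H)) \<Psi>"
  have phi: "\<phi> \<in> iso Lq (GM Mod H)" unfolding \<phi>_def by (rule group.iso_set_sym[OF MG Psi])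
  have phival: "\<phi> (\<pi> f) = (e \<circ> f) <#\<^bsub>GM\<^esub> H" if f: "f \<in> L" for f
  proof -
    have xG: "e \<circ> f \<in> G" using f Gchar[of "e \<circ> f"] by blast
    have ceq: "(e \<circ> f) <#\<^bsub>GM\<^esub> H = H #>\<^bsub>GM\<^esub> (e \<circ> f)"
      using normal.coset_eq[OF Hn] xG GMc by auto
    have cmem: "(e \<circ> f) <#\<^bsub>GM\<^esub> H \<in> carrier (GM Mod H)"
      using ceq xG GMc by (auto simp: FactGroup_def RCOSETS_def)
    have img: "\<pi> ` (H #>\<^bsub>GM\<^esub> (e \<circ> f)) = {\<pi> (e \<circ> f)}"
    proof -
      have hcomp: "\<pi> (h \<circ> (e \<circ> f)) = \<pi> (e \<circ> f)" if "h \<in> H" for h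
      proof -
        have hG: "h \<in> G" and ph: "\<pi> h = \<pi> e" using that by (auto simp: H_def kernel_def GMc Lqc)
        have "\<pi> (h \<circ> (e \<circ> f)) = m (\<pi> h) (\<pi> (e \<circ> f))" using part1 hG xG GL by blast
        also have "\<dots> = \<pi> (e \<circ> f)" using ph Lq.l_one[of "\<pi> (e \<circ> f)"] piL xG GL Lqc by auto
        finally show ?thesis .
      qed
      have eH: "e \<in> H" using eG by (simp add: H_def kernel_def GMc Lqc)
      have rc: "H #>\<^bsub>GM\<^esub> (e \<circ> f) = (\<lambda>h. h \<circ> (e \<circ> f)) ` H"
        by (auto simp: r_coset_def GMc)
      have "\<pi> ` (H #>\<^bsub>GM\<^esub> (e \<circ> f)) = (\<lambda>h. \<pi> (h \<circ> (e \<circ> f))) ` H"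
        unfolding rc image_image ..
      also have "\<dots> = (\<lambda>h. \<pi> (e \<circ> f)) ` H"
        using hcomp by (intro image_cong) auto
      also have "\<dots> = {\<pi> (e \<circ> f)}" using eH by blast
      finally show ?thesis .
    qed
    have "\<Psi> ((e \<circ> f) <#\<^bsub>GM\<^esub> H) = \<pi> f"
      using img ceq part2[OF f] by (simp add: \<Psi>_def)
    moreover have "inj_on \<Psi> (carrier (GM Mod H))" using Psi by (simp add: iso_def bij_betw_def)
    ultimately show ?thesis unfolding \<phi>_def using cmem by (metis inv_into_f_f)
  qed
  show ?thesis
    unfolding E_def[symmetric] L_def[symmetric] G_def[symmetric] GM_def[symmetric] Lq_def[symmetric]
  proof (intro conjI exI[of _ H] exI[of _ \<phi>])
    show "\<forall>f\<in>L. \<forall>g\<in>L. \<pi> (f \<circ> g) = m (\<pi> f) (\<pi> g)" using part1 by blast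
    show "\<forall>f\<in>L. \<pi> f = \<pi> (e \<circ> f)" using part2 by blast
    show "H \<lhd> GM" by (rule Hn)
    show "closedin (top_of_set G) H" by (rule Hclosed)
    show "little_structure_group E e \<subseteq> H" by (rule Gam)
    show "\<phi> \<in> iso Lq (GM Mod H)" by (rule phi)
    show "\<forall>f\<in>L. \<phi> (\<pi> f) = (e \<circ> f) <#\<^bsub>GM\<^esub> H" using phival by blast
  qed
qed

end
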